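(* There is a constant $C>0$ such that for every $n\ge1$: $\mathrm{Sen}(\overline{\mathcal S})\lesssim C\cdot\mathrm{Sen}(\tilde{\mathcal N})$, i.e., for every integer $0\le K\le\lfloor n/2\rfloor$ there is a probability measure $\mu_K$ on $[0,1/2]$ such that, entrywise, $\mathrm{Sen}(\overline{\mathcal S})_K\le C\int\mathrm{Sen}(\tilde{\mathcal N})_P\,d\mu_K(P)$.
   Context: Let $\mathbb{I}^n=\{0,1\}^n$ with Hamming distance $d$; operators on $\mathbb{R}^{\mathbb{I}^n}$ are identified with matrices and $A\le B$ means $B-A$ has nonnegative entries. For $0\le k\le n$, $(S_kf)(x)=\binom nk^{-1}\sum_{y:\,d(x,y)=k}f(y)$. $\mathrm{Sen}(\overline{\mathcal S})_K=\frac1{K+1}\sum_{\ell=0}^KS_\ell$ for $0\le K\le\lfloor n/2\rfloor$. For $p\in[0,1/2]$, $\tilde N_p=\sum_{k=0}^n\binom nkp^k(1-p)^{n-k}S_k$, and $\mathrm{Sen}(\tilde{\mathcal N})_P=\frac1P\int_0^P\tilde N_p\,dp$ for $P\in(0,1/2]$, with $\mathrm{Sen}(\tilde{\mathcal N})_0$ the identity (limit from above). For families $\mathcal A,\mathcal B$ of nonnegative matrices, $\mathcal A\lesssim\mathcal B$ means every $A\in\mathcal A$ satisfies $A\le\int B\,d\mu_A(B)$ for some probability measure $\mu_A$ on $\mathcal B$. *)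

theory Defs
  imports "HOL-Probability.Probability"
begin

text \<open>Points of the hypercube {0,1}^n are encoded as subsets of {..<n} (support of x).\<close>
definition hcube :: "nat \<Rightarrow> nat set set" where
  "hcube n = Pow {..<n}"

definition hdist :: "nat set \<Rightarrow> nat set \<Rightarrow> nat" where
  "hdist x y = card ((x - y) \<union> (y - x))"

definition S_op :: "nat \<Rightarrow> nat \<Rightarrow> nat set \<Rightarrow> nat set \<Rightarrow> real" where
  "S_op n k x y = (if hdist x y = k then 1 / real (n choose k) else 0)"

definition SenS :: "nat \<Rightarrow> nat \<Rightarrow> nat set \<Rightarrow> nat set \<Rightarrow> real" where
  "SenS n K x y = (1 / real (K + 1)) * (\<Sum>l=0..K. S_op n l x y)"

definition Ntil :: "nat \<Rightarrow> real \<Rightarrow> nat set \<Rightarrow> nat set \<Rightarrow> real" where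
  "Ntil n p x y = (\<Sum>k=0..n. real (n choose k) * p ^ k * (1 - p) ^ (n - k) * S_op n k x y)"

definition SenN :: "nat \<Rightarrow> real \<Rightarrow> nat set \<Rightarrow> nat set \<Rightarrow> real" where
  "SenN n P x y = (if P = 0 then (if x = y then 1 else 0)
                   else (1 / P) * integral {0..P} (\<lambda>p. Ntil n p x y))"

end

theory Submission
  imports Defs
begin


definition B :: "nat \<Rightarrow> real \<Rightarrow> nat \<Rightarrow> real" where
  "B m P i = real (m choose i) * P ^ i * (1 - P) ^ (m - i)"

definition T :: "nat \<Rightarrow> nat \<Rightarrow> real \<Rightarrow> real" where
  "T m j P = (\<Sum>i=j..m. B m P i)"

lemma M0: "(\<Sum>i\<le>m. B m P i) = 1"
  using binomial_ring[of P "1-P" m] by (simp add: B_def)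

lemma B_shift: "real (Suc j) * B (Suc k) P (Suc j) = real (Suc k) * P * B k P j"
proof -
  have e: "real (Suc j) * real (Suc k choose Suc j) = real (Suc k) * real (k choose j)"
    using Suc_times_binomial[of j k] by (metis of_nat_mult)
  have "real (Suc j) * B (Suc k) P (Suc j) = (real (Suc j) * real (Suc k choose Suc j)) * (P * (P^j * (1-P)^(k-j)))"
    unfolding B_def by (simp add: ac_simps)
  also have "\<dots> = (real (Suc k) * real (k choose j)) * (P * (P^j * (1-P)^(k-j)))"
    by (simp only: e)
  also have "\<dots> = real (Suc k) * P * B k P j" unfolding B_def by (simp add: ac_simps)
  finally show ?thesis .
qed

lemma M1: "(\<Sum>i\<le>m. real i * B m P i) = real m * P"
proof (cases m)
  case 0 then show ?thesis by simp
next
  case (Suc k)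
  have "(\<Sum>i\<le>m. real i * B m P i) = (\<Sum>j\<le>k. real (Suc j) * B (Suc k) P (Suc j))"
    unfolding Suc by (subst sum.atMost_Suc_shift) simp
  also have "\<dots> = (\<Sum>j\<le>k. real (Suc k) * P * B k P j)"
    by (simp only: B_shift)
  also have "\<dots> = real m * P" by (simp add: sum_distrib_left[symmetric] M0 Suc)
  finally show ?thesis .
qed

lemma M2: "(\<Sum>i\<le>m. real i * (real i - 1) * B m P i) = real m * (real m - 1) * P^2"
proof (cases m)
  case 0 then show ?thesis by simp
next
  case (Suc k)
  have "(\<Sum>i\<le>m. real i * (real i - 1) * B m P i) = (\<Sum>j\<le>k. real j * (real (Suc j) * B (Suc k) P (Suc j)))"
    unfolding Suc by (subst sum.atMost_Suc_shift) (simp add: ac_simps)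
  also have "\<dots> = (\<Sum>j\<le>k. real j * (real (Suc k) * P * B k P j))"
    by (simp only: B_shift)
  also have "\<dots> = real (Suc k) * P * (\<Sum>j\<le>k. real j * B k P j)"
    by (simp add: sum_distrib_left ac_simps)
  also have "\<dots> = real m * (real m - 1) * P^2" by (simp add: M1 Suc power2_eq_square)
  finally show ?thesis .
qed

lemma Var: "(\<Sum>i\<le>m. B m P i * (real i - real m * P)^2) = real m * P * (1 - P)"
proof -
  have "(\<Sum>i\<le>m. B m P i * (real i - real m * P)^2) =
     (\<Sum>i\<le>m. real i * (real i - 1) * B m P i + (1 - 2 * real m * P) * (real i * B m P i)
      + (real m * P)^2 * B m P i)"
    by (rule sum.cong) (simp_all add: power2_eq_square algebra_simps)
  also have "\<dots> = (\<Sum>i\<le>m. real i * (real i - 1) * B m P i) + (1 - 2 * real m * P) * (\<Sum>i\<le>m. real i * B m P i)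
      + (real m * P)^2 * (\<Sum>i\<le>m. B m P i)"
    by (simp add: sum.distrib sum_distrib_left)
  also have "\<dots> = real m * (real m - 1) * P^2 + (1 - 2 * real m * P) * (real m * P) + (real m * P)^2 * 1"
    by (simp only: M0 M1 M2)
  also have "\<dots> = real m * P * (1 - P)" by (simp add: power2_eq_square algebra_simps)
  finally show ?thesis .
qed




lemma B_deriv:
  assumes "1 \<le> j" "j \<le> m"
  shows "((\<lambda>P. B m P j) has_real_derivative
     (real m * real ((m-1) choose (j-1)) * P^(j-1) * (1-P)^(m-j) -
      real m * real ((m-1) choose j) * P^j * (1-P)^(m-j-1))) (at P)"
proof -
  obtain j' where j: "j = Suc j'" using assms by (cases j) auto
  have e1: "real j * real (m choose j) = real m * real ((m-1) choose (j-1))"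
    using binomial_absorption[of j' m] j by (metis of_nat_mult diff_Suc_1)
  have e2: "real (m - j) * real (m choose j) = real m * real ((m-1) choose j)"
    using binomial_absorb_comp[of m j] by (metis of_nat_mult)
  have "((\<lambda>P. B m P j) has_real_derivative
     (real (m choose j) * (real j * P^(j-1) * (1-P)^(m-j) + P^j * (real (m-j) * (1-P)^(m-j-1) * (-1))))) (at P)"
    unfolding B_def
    by (auto intro!: derivative_eq_intros simp: algebra_simps)
  moreover have "real (m choose j) * (real j * P^(j-1) * (1-P)^(m-j) + P^j * (real (m-j) * (1-P)^(m-j-1) * (-1)))
     = (real j * real (m choose j)) * P^(j-1) * (1-P)^(m-j) - (real (m - j) * real (m choose j)) * P^j * (1-P)^(m-j-1)"
    by (simp add: algebra_simps)
  ultimately show ?thesis unfolding e1 e2 by simp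
qed

lemma T_deriv:
  assumes "1 \<le> j" "j \<le> m"
  shows "(T m j has_real_derivative (real m * real ((m-1) choose (j-1)) * P^(j-1) * (1-P)^(m-j))) (at P)"
  using assms
proof (induction "m - j" arbitrary: j)
  case 0
  then have jm: "j = m" by simp
  have eT: "T m j = (\<lambda>P. P ^ m)" unfolding T_def jm by (rule ext) (simp add: B_def)
  have eD: "real m * real ((m-1) choose (j-1)) * P^(j-1) * (1-P)^(m-j) = real m * P^(m-1)"
    using jm by simp
  show ?case unfolding eT eD using DERIV_pow[of m P UNIV] by simp
next
  case (Suc r)
  then have jm: "j < m" by simp
  have IH: "(T m (Suc j) has_real_derivative (real m * real ((m-1) choose j) * P^j * (1-P)^(m - Suc j))) (at P)"
    using Suc.hyps(1)[of "Suc j"] Suc.hyps(2) Suc.prems jm by simp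
  have split: "T m j = (\<lambda>P. B m P j + T m (Suc j) P)"
    unfolding T_def using jm by (intro ext) (simp add: sum.atLeast_Suc_atMost)
  have "(T m j has_real_derivative
      ((real m * real ((m-1) choose (j-1)) * P^(j-1) * (1-P)^(m-j) -
      real m * real ((m-1) choose j) * P^j * (1-P)^(m-j-1)) +
      real m * real ((m-1) choose j) * P^j * (1-P)^(m - Suc j))) (at P)"
    unfolding split by (intro DERIV_add B_deriv IH) (use Suc.prems jm in auto)
  then show ?case by simp
qed

lemma T_zero: "1 \<le> j \<Longrightarrow> T m j 0 = 0"
  unfolding T_def B_def by (intro sum.neutral) auto

lemma integral_identity:
  assumes "d \<le> n" "0 \<le> P"
  shows "integral {0..P} (\<lambda>p. p^d * (1-p)^(n-d)) = T (Suc n) (Suc d) P / (real (Suc n) * real (n choose d))"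
proof -
  have pos: "real (Suc n) * real (n choose d) > 0" using assms by simp
  have "((\<lambda>p. p^d * (1-p)^(n-d)) has_integral
     (T (Suc n) (Suc d) P / (real (Suc n) * real (n choose d)) - T (Suc n) (Suc d) 0 / (real (Suc n) * real (n choose d)))) {0..P}"
  proof (rule fundamental_theorem_of_calculus[OF assms(2)])
    fix x :: real assume "x \<in> {0..P}"
    have "(T (Suc n) (Suc d) has_real_derivative (real (Suc n) * real (n choose d) * x^d * (1-x)^(n-d))) (at x)"
      using T_deriv[of "Suc d" "Suc n" x] assms by simp
    then have "((\<lambda>P. T (Suc n) (Suc d) P / (real (Suc n) * real (n choose d))) has_real_derivative
       (real (Suc n) * real (n choose d) * x^d * (1-x)^(n-d)) / (real (Suc n) * real (n choose d))) (at x)"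
      by (rule DERIV_cdivide) 
    then have "((\<lambda>P. T (Suc n) (Suc d) P / (real (Suc n) * real (n choose d))) has_real_derivative
       (x^d * (1-x)^(n-d))) (at x)"
      using pos assms(1) by simp
    then show "((\<lambda>P. T (Suc n) (Suc d) P / (real (Suc n) * real (n choose d))) has_vector_derivative
       (x^d * (1-x)^(n-d))) (at x within {0..P})"
      by (simp add: has_real_derivative_iff_has_vector_derivative[symmetric] has_field_derivative_at_within)
  qed
  then show ?thesis by (simp add: T_zero integral_unique)
qed




lemma B_nonneg: "0 \<le> P \<Longrightarrow> P \<le> 1 \<Longrightarrow> 0 \<le> B m P i"
  unfolding B_def by simp

lemma T_nonneg: "0 \<le> P \<Longrightarrow> P \<le> 1 \<Longrightarrow> 0 \<le> T m j P"
  unfolding T_def by (intro sum_nonneg B_nonneg) auto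

lemma tail_split: "K \<le> m \<Longrightarrow> T m (Suc K) P = 1 - (\<Sum>i\<le>K. B m P i)"
proof -
  assume K: "K \<le> m"
  have "{..m} = {..K} \<union> {Suc K..m}" using K by auto
  then have "(\<Sum>i\<le>m. B m P i) = (\<Sum>i\<le>K. B m P i) + (\<Sum>i=Suc K..m. B m P i)"
    by (simp add: sum.union_disjoint ivl_disj_int)
  then show ?thesis using M0[of m P] unfolding T_def by simp
qed

lemma T_mono: "0 \<le> P \<Longrightarrow> P \<le> 1 \<Longrightarrow> d \<le> K \<Longrightarrow> T m (Suc K) P \<le> T m (Suc d) P"
  unfolding T_def by (intro sum_mono2) (auto intro: B_nonneg)

lemma cheb:
  assumes P: "0 \<le> P" "P \<le> 1" and K: "K \<le> m" and lt: "real K < real m * P"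
  shows "(\<Sum>i\<le>K. B m P i) \<le> real m * P * (1 - P) / (real m * P - real K)^2"
proof -
  define D where "D = (real m * P - real K)^2"
  have D: "D > 0" unfolding D_def using lt by simp
  have "(\<Sum>i\<le>K. B m P i) \<le> (\<Sum>i\<le>K. B m P i * (real i - real m * P)^2 / D)"
  proof (rule sum_mono)
    fix i assume "i \<in> {..K}"
    then have i: "real i \<le> real K" by simp
    have "D \<le> (real i - real m * P)^2"
    proof -
      have "(real m * P - real K)^2 \<le> (real m * P - real i)^2"
        by (rule power_mono) (use i lt in auto)
      then show ?thesis unfolding D_def by (simp add: power2_commute)
    qed
    then have "1 \<le> (real i - real m * P)^2 / D" using D by simp
    then have "B m P i * 1 \<le> B m P i * ((real i - real m * P)^2 / D)"
      by (intro mult_left_mono B_nonneg P)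
    then show "B m P i \<le> B m P i * (real i - real m * P)^2 / D" by simp
  qed
  also have "\<dots> \<le> (\<Sum>i\<le>m. B m P i * (real i - real m * P)^2 / D)"
    by (intro sum_mono2) (use K D in \<open>auto intro!: divide_nonneg_pos mult_nonneg_nonneg B_nonneg P\<close>)
  also have "\<dots> = real m * P * (1 - P) / D"
    by (simp add: sum_divide_distrib[symmetric] Var)
  finally show ?thesis unfolding D_def .
qed

lemma binom_half:
  assumes "2 * K + 1 \<le> m"
  shows "(\<Sum>i\<le>K. m choose i) \<le> (\<Sum>i=Suc K..m. m choose i)"
proof -
  have "(\<Sum>i\<le>K. m choose i) = (\<Sum>i\<le>K. m choose (m - i))"
    using assms by (intro sum.cong refl) (metis binomial_symmetric atMost_iff le_trans le_add2 mult_2 le_add1 add.commute dual_order.trans)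
  also have "\<dots> = (\<Sum>i\<in>(\<lambda>i. m - i) ` {..K}. m choose i)"
    by (subst sum.reindex) (use assms in \<open>auto simp: inj_on_def\<close>)
  also have "\<dots> \<le> (\<Sum>i=Suc K..m. m choose i)"
    by (intro sum_mono2) (use assms in auto)
  finally show ?thesis .
qed

lemma half_tail:
  assumes "2 * K + 1 \<le> m"
  shows "T m (Suc K) (1/2) \<ge> 1/2"
proof -
  have Bh: "B m (1/2) i = real (m choose i) * (1/2)^m" if "i \<le> m" for i
  proof -
    have "(1/2::real)^i * (1/2)^(m-i) = (1/2)^m" using that by (simp add: power_add[symmetric])
    then show ?thesis unfolding B_def by (simp add: mult.assoc)
  qed
  have "(\<Sum>i\<le>K. B m (1/2) i) = (\<Sum>i\<le>K. real (m choose i)) * (1/2)^m"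
    using assms by (simp add: Bh sum_distrib_right)
  also have "\<dots> \<le> (\<Sum>i=Suc K..m. real (m choose i)) * (1/2)^m"
    using binom_half[OF assms] by (intro mult_right_mono) (simp_all flip: of_nat_sum)
  also have "\<dots> = T m (Suc K) (1/2)"
    unfolding T_def by (simp add: Bh sum_distrib_right)
  finally have "(\<Sum>i\<le>K. B m (1/2) i) \<le> T m (Suc K) (1/2)" .
  moreover have "T m (Suc K) (1/2) = 1 - (\<Sum>i\<le>K. B m (1/2) i)"
    using assms by (intro tail_split) simp
  ultimately show ?thesis by linarith
qed

lemma small_tail:
  assumes K: "1 \<le> K" "8 * K \<le> n"
  shows "T (Suc n) (Suc K) (4 * real K / real n) \<ge> 1/2"
proof -
  define P where "P = 4 * real K / real n"
  define a where "a = real (Suc n) * P"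
  have n: "real n > 0" using K by simp
  have P0: "0 \<le> P" unfolding P_def by simp
  have P1: "P \<le> 1"
  proof -
    have "4 * real K \<le> real n" using K by simp
    then show ?thesis unfolding P_def using n by simp
  qed
  have a4: "a \<ge> 4 * real K"
  proof -
    have "a = 4 * real K * (real (Suc n) / real n)" unfolding a_def P_def by simp
    moreover have "real (Suc n) / real n \<ge> 1" using n by simp
    then have "4 * real K * 1 \<le> 4 * real K * (real (Suc n) / real n)"
      by (intro mult_left_mono) simp_all
    ultimately show ?thesis by simp
  qed
  have Kr: "real K \<ge> 1" using K by simp
  have lt: "real K < a" using a4 Kr by linarith
  have "(\<Sum>i\<le>K. B (Suc n) P i) \<le> a * (1 - P) / (a - real K)^2"
    using cheb[OF P0 P1 _ lt[unfolded a_def]] K unfolding a_def by simp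
  also have "\<dots> \<le> a / (a - real K)^2"
    using P0 P1 lt a4 Kr by (intro divide_right_mono) (auto simp: mult_le_cancel_left1)
  also have "\<dots> \<le> 1/2"
  proof -
    have h1: "a - real K \<ge> 3 * a / 4" using a4 by linarith
    have "(3 * a / 4)^2 \<le> (a - real K)^2" by (rule power_mono[OF h1]) (use a4 Kr in linarith)
    moreover have "2 * a \<le> (3 * a / 4)^2"
    proof -
      have "a \<ge> 4" using a4 Kr by linarith
      then have "(3 * a / 4)^2 - 2 * a = a * (9 * a / 16 - 2)" by (simp add: power2_eq_square algebra_simps)
      also have "\<dots> \<ge> 0" using \<open>a \<ge> 4\<close> by (intro mult_nonneg_nonneg) auto
      finally show ?thesis by simp
    qed
    ultimately have "2 * a \<le> (a - real K)^2" by linarith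
    moreover have "(a - real K)^2 > 0" using lt by simp
    ultimately show ?thesis by (simp add: divide_le_eq)
  qed
  finally have "(\<Sum>i\<le>K. B (Suc n) P i) \<le> 1/2" .
  moreover have "T (Suc n) (Suc K) P = 1 - (\<Sum>i\<le>K. B (Suc n) P i)"
    using K by (intro tail_split) simp
  ultimately show ?thesis unfolding P_def[symmetric] by linarith
qed




lemma hdist_le: "x \<subseteq> {..<n} \<Longrightarrow> y \<subseteq> {..<n} \<Longrightarrow> hdist x y \<le> n"
  unfolding hdist_def using card_mono[of "{..<n}" "(x - y) \<union> (y - x)"] by auto

lemma hdist_0: "finite x \<Longrightarrow> finite y \<Longrightarrow> hdist x y = 0 \<longleftrightarrow> x = y"
  unfolding hdist_def by auto

lemma Ntil_eq:
  assumes "hdist x y \<le> n"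
  shows "Ntil n p x y = p ^ hdist x y * (1 - p) ^ (n - hdist x y)"
proof -
  let ?d = "hdist x y"
  have eq: "(\<lambda>k. real (n choose k) * p ^ k * (1 - p) ^ (n - k) * S_op n k x y) =
        (\<lambda>k. if k = ?d then p ^ ?d * (1 - p) ^ (n - ?d) else 0)"
    using assms by (intro ext) (auto simp: S_op_def)
  show ?thesis unfolding Ntil_def by (subst eq) (simp add: assms)
qed

lemma SenS_eq:
  "SenS n K x y = (if hdist x y \<le> K then 1 / real (K + 1) * (1 / real (n choose hdist x y)) else 0)"
proof -
  let ?d = "hdist x y"
  have eq: "(\<lambda>l. S_op n l x y) = (\<lambda>l. if l = ?d then 1 / real (n choose ?d) else 0)"
    by (intro ext) (auto simp: S_op_def)
  show ?thesis unfolding SenS_def by (subst eq) simp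
qed

definition g :: "nat \<Rightarrow> nat \<Rightarrow> real \<Rightarrow> real" where
  "g n d P = (if P = 0 then (if d = 0 then 1 else 0)
      else T (Suc n) (Suc d) P / (P * (real (Suc n) * real (n choose d))))"

lemma g_measurable: "g n d \<in> borel_measurable borel"
  unfolding g_def T_def B_def by measurable

lemma SenN_eq:
  assumes "x \<in> hcube n" "y \<in> hcube n" "0 \<le> P"
  shows "SenN n P x y = g n (hdist x y) P"
proof -
  have xy: "x \<subseteq> {..<n}" "y \<subseteq> {..<n}" using assms unfolding hcube_def by auto
  then have fin: "finite x" "finite y" by (auto intro: finite_subset)
  have d: "hdist x y \<le> n" using hdist_le[OF xy] .
  have fe: "(\<lambda>p. Ntil n p x y) = (\<lambda>p. p ^ hdist x y * (1 - p) ^ (n - hdist x y))"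
    using Ntil_eq[OF d] by (intro ext) simp
  have int: "integral {0..P} (\<lambda>p. Ntil n p x y) =
      T (Suc n) (Suc (hdist x y)) P / (real (Suc n) * real (n choose hdist x y))"
    unfolding fe by (rule integral_identity[OF d assms(3)])
  have xyd: "(x = y) = (hdist x y = 0)" using hdist_0[OF fin] by simp
  show ?thesis
    unfolding SenN_def g_def int xyd by (simp only: times_divide_eq_left divide_divide_eq_left mult_1 mult.commute)
qed

lemma g_nonneg: "0 \<le> P \<Longrightarrow> P \<le> 1 \<Longrightarrow> 0 \<le> g n d P"
  unfolding g_def by (auto intro!: divide_nonneg_nonneg T_nonneg)

lemma g_lower:
  assumes "0 < P" "P \<le> 1" "d \<le> K"
  shows "T (Suc n) (Suc K) P / (P * (real (Suc n) * real (n choose d))) \<le> g n d P"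
  unfolding g_def using assms T_mono[of P d K "Suc n"]
  by (auto intro!: divide_right_mono)

definition P0 :: "nat \<Rightarrow> nat \<Rightarrow> real" where
  "P0 n K = (if K = 0 then 0 else if 8 * K \<le> n then 4 * real K / real n else 1/2)"

lemma P0_range: "1 \<le> n \<Longrightarrow> 0 \<le> P0 n K \<and> P0 n K \<le> 1/2"
  unfolding P0_def by (auto simp: field_simps)

lemma key:
  assumes n: "1 \<le> n" and K: "K \<le> n div 2" and d: "d \<le> n"
  shows "(if d \<le> K then 1 / real (K + 1) * (1 / real (n choose d)) else 0) \<le> 16 * g n d (P0 n K)"
proof -
  have Pr: "0 \<le> P0 n K" "P0 n K \<le> 1" using P0_range[OF n, of K] by auto
  have c: "real (n choose d) > 0" using d by simp
  show ?thesis
  proof (cases "d \<le> K")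
    case False
    then show ?thesis using g_nonneg[OF Pr] by simp
  next
    case dK: True
    show ?thesis
    proof (cases "K = 0")
      case True
      then show ?thesis using dK by (simp add: P0_def g_def)
    next
      case K0: False
      define c where "c = real (n choose d)"
      have cpos: "c > 0" unfolding c_def using c .
      show ?thesis
      proof (cases "8 * K \<le> n")
        case True
        define P where "P = 4 * real K / real n"
        have PP: "P0 n K = P" unfolding P0_def P_def using K0 True by simp
        have Ppos: "P > 0" unfolding P_def using K0 n by simp
        have t: "T (Suc n) (Suc K) P \<ge> 1/2" unfolding P_def using small_tail[of K n] K0 True by simp
        have "(1/2) / (P * (real (Suc n) * c)) \<le> T (Suc n) (Suc K) P / (P * (real (Suc n) * c))"
          using t Ppos cpos by (intro divide_right_mono) auto
        also have "\<dots> \<le> g n d P" unfolding c_def using g_lower[of P d K n] Ppos Pr PP dK by simp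
        finally have gl: "(1/2) / (P * (real (Suc n) * c)) \<le> g n d P" .
        have "1 / real (K + 1) * (1 / c) \<le> 16 * ((1/2) / (P * (real (Suc n) * c)))"
        proof -
          have D: "P * real (Suc n) > 0" using Ppos by simp
          have e1: "16 * ((1/2) / (P * (real (Suc n) * c))) = 8 / (P * real (Suc n)) * (1 / c)" by simp
          have nr: "real n > 0" using n by simp
          have "P * real (Suc n) = 4 * real K * real (Suc n) / real n" unfolding P_def by simp
          also have "\<dots> \<le> 8 * real (K + 1)"
          proof -
            have "real (Suc n) \<le> 2 * real n" using n by simp
            then have "4 * real K * real (Suc n) \<le> 4 * real K * (2 * real n)" by (intro mult_left_mono) auto
            also have "\<dots> \<le> 8 * real (K + 1) * real n" using nr by (simp add: algebra_simps)
            finally show ?thesis using nr by (simp add: divide_le_eq)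
          qed
          finally have "P * real (Suc n) / real (K + 1) \<le> 8" by (simp add: divide_le_eq)
          then have "1 / real (K + 1) \<le> 8 / (P * real (Suc n))" using D by (simp add: le_divide_eq)
          then show ?thesis unfolding e1 using cpos by (intro mult_right_mono) auto
        qed
        moreover have "16 * ((1/2) / (P * (real (Suc n) * c))) \<le> 16 * g n d P"
          using gl by (rule mult_left_mono) simp
        ultimately have "1 / real (K + 1) * (1 / c) \<le> 16 * g n d P" by (rule order_trans)
        then show ?thesis using dK PP unfolding c_def by simp
      next
        case False
        have PP: "P0 n K = 1/2" unfolding P0_def using K0 False by simp
        have "2 * K + 1 \<le> Suc n" using K by simp
        then have t: "T (Suc n) (Suc K) (1/2) \<ge> 1/2" by (rule half_tail)
        have "(1/2) / ((1/2) * (real (Suc n) * c)) \<le> T (Suc n) (Suc K) (1/2) / ((1/2) * (real (Suc n) * c))"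
          using t cpos by (intro divide_right_mono) auto
        also have "\<dots> \<le> g n d (1/2)" unfolding c_def using g_lower[of "1/2" d K n] dK by simp
        finally have gl: "1 / (real (Suc n) * c) \<le> g n d (1/2)" by simp
        have "1 / real (K + 1) * (1 / c) \<le> 16 * (1 / (real (Suc n) * c))"
        proof -
          have "real (Suc n) \<le> 16 * real (K + 1)" using False by simp
          then have "real (Suc n) / real (K + 1) \<le> 16" by (simp add: divide_le_eq)
          then have "1 / real (K + 1) \<le> 16 / real (Suc n)" by (simp add: le_divide_eq)
          moreover have "16 * (1 / (real (Suc n) * c)) = 16 / real (Suc n) * (1 / c)" by simp
          ultimately show ?thesis using cpos by (simp only:) (intro mult_right_mono, auto)
        qed
        moreover have "16 * (1 / (real (Suc n) * c)) \<le> 16 * g n d (1/2)"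
          using gl by (rule mult_left_mono) simp
        ultimately have "1 / real (K + 1) * (1 / c) \<le> 16 * g n d (1/2)" by (rule order_trans)
        then show ?thesis unfolding PP using dK unfolding c_def by simp
      qed
    qed
  qed
qed

theorem lemma5:
  shows "\<exists>C::real. C > 0 \<and>
    (\<forall>n::nat. n \<ge> 1 \<longrightarrow>
      (\<forall>K::nat. K \<le> n div 2 \<longrightarrow>
        (\<exists>\<mu>::real measure. prob_space \<mu> \<and>
            sets \<mu> = sets (restrict_space borel {0..1/2}) \<and>
            (\<forall>x\<in>hcube n. \<forall>y\<in>hcube n.
               integrable \<mu> (\<lambda>P. SenN n P x y) \<and>
               SenS n K x y \<le> C * (\<integral>P. SenN n P x y \<partial>\<mu>)))))"
proof (intro exI[of _ 16] conjI allI impI)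
  show "(16::real) > 0" by simp
next
  fix n K :: nat
  assume n: "1 \<le> n" and K: "K \<le> n div 2"
  define M where "M = restrict_space (borel :: real measure) {0..1/2}"
  have spM: "space M = {0..1/2}" unfolding M_def by simp
  have Pin: "P0 n K \<in> space M" using P0_range[OF n] spM by simp
  show "\<exists>\<mu>::real measure. prob_space \<mu> \<and>
            sets \<mu> = sets (restrict_space borel {0..1/2}) \<and>
            (\<forall>x\<in>hcube n. \<forall>y\<in>hcube n.
               integrable \<mu> (\<lambda>P. SenN n P x y) \<and>
               SenS n K x y \<le> 16 * (\<integral>P. SenN n P x y \<partial>\<mu>))"
  proof (intro exI[of _ "return M (P0 n K)"] conjI ballI)
    show "prob_space (return M (P0 n K))" by (rule prob_space_return[OF Pin])
    show "sets (return M (P0 n K)) = sets (restrict_space borel {0..1/2})" unfolding M_def by simp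
    fix x y assume x: "x \<in> hcube n" and y: "y \<in> hcube n"
    have meas: "(\<lambda>P. SenN n P x y) \<in> borel_measurable M"
    proof -
      have "(\<lambda>P. g n (hdist x y) P) \<in> borel_measurable M"
        unfolding M_def by (rule measurable_restrict_space1) (rule g_measurable)
      moreover have "\<And>P. P \<in> space M \<Longrightarrow> SenN n P x y = g n (hdist x y) P"
        using SenN_eq[OF x y] spM by auto
      ultimately show ?thesis using measurable_cong[of M "\<lambda>P. SenN n P x y" "g n (hdist x y)"] by simp
    qed
    show "integrable (return M (P0 n K)) (\<lambda>P. SenN n P x y)"
    proof (subst integrable_iff_bounded, intro conjI)
      show "(\<lambda>P. SenN n P x y) \<in> borel_measurable (return M (P0 n K))"
        by (subst measurable_cong_sets[OF sets_return refl]) (rule meas)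
      note meas[measurable]
      have "(\<lambda>P. ennreal (norm (SenN n P x y))) \<in> borel_measurable M" by measurable
      then show "(\<integral>\<^sup>+ P. ennreal (norm (SenN n P x y)) \<partial>return M (P0 n K)) < \<infinity>"
        by (simp add: nn_integral_return[OF Pin])
    qed
    have int: "(\<integral>P. SenN n P x y \<partial>return M (P0 n K)) = SenN n (P0 n K) x y"
      by (rule integral_return[OF Pin meas])
    have xy: "x \<subseteq> {..<n}" "y \<subseteq> {..<n}" using x y unfolding hcube_def by auto
    have d: "hdist x y \<le> n" by (rule hdist_le[OF xy])
    have "SenN n (P0 n K) x y = g n (hdist x y) (P0 n K)"
      using SenN_eq[OF x y] P0_range[OF n] by auto
    then show "SenS n K x y \<le> 16 * (\<integral>P. SenN n P x y \<partial>return M (P0 n K))"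
      unfolding int SenS_eq using key[OF n K d] by simp
  qed
qed


end
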